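(* For all teams $T,S$ the following are equivalent: (1) $T\equiv_{\mathrm{st}}S$; (2) there are surjective, non-decreasing functions $\mu,\nu:\mathbb N\to\mathbb N$ such that $T^{\mu(n)}\equiv_{\mathrm{st}}S^{\nu(n)}$ for all $n\ge0$.
   Context: A trace is an infinite sequence $t=t(0)t(1)\cdots$ of subsets of a set $\mathrm{AP}$ of propositions; $t^i:=t(i)t(i+1)\cdots$. A team is a set of traces; $T^i:=\{t^i:t\in T\}$. A stuttering function of a trace $t$ is a strictly increasing function $f:\mathbb N\to\mathbb N$ with $f(0)=0$ such that $t(f(k))=t(f(k)+1)=\cdots=t(f(k+1)-1)$ for all $k\ge0$. A stuttering function of a team $T$ is a function that is a stuttering function of every $t\in T$. For $f:\mathbb N\to\mathbb N$, $t[f]:=t(f(0))t(f(1))t(f(2))\cdots$ and $T[f]:=\{t[f]:t\in T\}$. Teams $T,T'$ are stutter-equivalent ($T\equiv_{\mathrm{st}}T'$) if there are a stuttering function $f$ of $T$ and a stuttering function $f'$ of $T'$ with $T[f]=T'[f']$. *)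

theory Defs
  imports Main
begin

type_synonym 'a trace = "nat \<Rightarrow> 'a set"
type_synonym 'a team = "'a trace set"

definition suffix_trace :: "'a trace \<Rightarrow> nat \<Rightarrow> 'a trace" where
  "suffix_trace t i = (\<lambda>n. t (i + n))"

definition suffix_team :: "'a team \<Rightarrow> nat \<Rightarrow> 'a team" where
  "suffix_team T i = (\<lambda>t. suffix_trace t i) ` T"

definition stuttering_fun :: "'a trace \<Rightarrow> (nat \<Rightarrow> nat) \<Rightarrow> bool" where
  "stuttering_fun t f \<longleftrightarrow> strict_mono f \<and> f 0 = 0 \<and>
     (\<forall>k j. f k \<le> j \<and> j < f (Suc k) \<longrightarrow> t j = t (f k))"

definition stuttering_fun_team :: "'a team \<Rightarrow> (nat \<Rightarrow> nat) \<Rightarrow> bool" where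
  "stuttering_fun_team T f \<longleftrightarrow> (\<forall>t\<in>T. stuttering_fun t f)"

definition apply_fun_trace :: "'a trace \<Rightarrow> (nat \<Rightarrow> nat) \<Rightarrow> 'a trace" where
  "apply_fun_trace t f = (\<lambda>k. t (f k))"

definition apply_fun_team :: "'a team \<Rightarrow> (nat \<Rightarrow> nat) \<Rightarrow> 'a team" where
  "apply_fun_team T f = (\<lambda>t. apply_fun_trace t f) ` T"

definition stutter_equiv :: "'a team \<Rightarrow> 'a team \<Rightarrow> bool" where
  "stutter_equiv T T' \<longleftrightarrow> (\<exists>f f'. stuttering_fun_team T f \<and> stuttering_fun_team T' f' \<and>
     apply_fun_team T f = apply_fun_team T' f')"

end

theory Submission
  imports Defs
begin

lemma stut_block:
  assumes "stuttering_fun t f" "f k \<le> j" "j < f (Suc k)"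
  shows "t j = t (f k)"
  using assms unfolding stuttering_fun_def by blast

definition blk :: "(nat \<Rightarrow> nat) \<Rightarrow> nat \<Rightarrow> nat" where
  "blk g n = (LEAST k. n < g (Suc k))"

lemma blk_props:
  assumes "strict_mono g" "g 0 = 0"
  shows "g (blk g n) \<le> n \<and> n < g (Suc (blk g n))"
proof -
  have ex: "n < g (Suc n)"
    using strict_mono_imp_increasing[OF assms(1), of "Suc n"] by simp
  have 1: "n < g (Suc (blk g n))"
    unfolding blk_def by (rule LeastI[of _ n], rule ex)
  have "g (blk g n) \<le> n"
  proof (cases "blk g n")
    case 0 then show ?thesis using assms(2) by simp
  next
    case (Suc k)
    have "\<not> n < g (Suc k)"
    proof
      assume "n < g (Suc k)"
      then have "blk g n \<le> k" unfolding blk_def by (rule Least_le)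
      with Suc show False by simp
    qed
    then show ?thesis using Suc by simp
  qed
  with 1 show ?thesis by simp
qed

lemma blk_unique:
  assumes "strict_mono g" "g k \<le> n" "n < g (Suc k)"
  shows "blk g n = k"
  unfolding blk_def
proof (rule Least_equality)
  show "n < g (Suc k)" by fact
  fix k' assume "n < g (Suc k')"
  show "k \<le> k'"
  proof (rule ccontr)
    assume "\<not> k \<le> k'"
    then have "Suc k' \<le> k" by simp
    then have "g (Suc k') \<le> g k" using assms(1) strict_mono_less_eq by blast
    with \<open>n < g (Suc k')\<close> assms(2) show False by simp
  qed
qed

lemma blk_mono:
  assumes "n \<le> m" "strict_mono g" "g 0 = 0"
  shows "blk g n \<le> blk g m"
proof -
  have "m < g (Suc (blk g m))" using blk_props[OF assms(2,3)] by blast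
  then have "n < g (Suc (blk g m))" using assms(1) by simp
  then show ?thesis unfolding blk_def by (rule Least_le)
qed

lemma shift_equiv:
  assumes st: "stuttering_fun_team T f" and sm: "strict_mono f" and p: "p < f (Suc k) - f k"
  defines "g \<equiv> (\<lambda>j. if j = 0 then 0 else f (k + j) - f k - p)"
  shows "stuttering_fun_team (suffix_team T (f k + p)) g \<and>
         apply_fun_team (suffix_team T (f k + p)) g = (\<lambda>t j. t (f (k + j))) ` T"
proof -
  have fge: "f (k + j) \<ge> f (Suc k)" if "j \<ge> 1" for j
    using sm strict_mono_less_eq that by fastforce
  have smg: "strict_mono g"
    unfolding strict_mono_Suc_iff
  proof
    fix j
    show "g j < g (Suc j)"
    proof (cases "j = 0")
      case True then show ?thesis using p by (simp add: g_def)
    next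
      case False
      have "f (k + j) < f (k + Suc j)" using sm by (simp add: strict_mono_less)
      moreover have "f (k + j) \<ge> f (Suc k)" using fge False by simp
      ultimately show ?thesis using False p by (simp add: g_def)
    qed
  qed
  have val: "t (f k + p + g j) = t (f (k + j))" if "t \<in> T" for t j
  proof (cases "j = 0")
    case True
    have "f k < f (Suc k)" using sm by (simp add: strict_mono_less)
    then have "t (f k + p) = t (f k)"
      using stut_block[of t f k "f k + p"] st that p unfolding stuttering_fun_team_def by simp
    then show ?thesis using True by (simp add: g_def)
  next
    case False
    have "f (k + j) \<ge> f (Suc k)" using fge False by simp
    then show ?thesis using False p by (simp add: g_def)
  qed
  have stg: "stuttering_fun (suffix_trace t (f k + p)) g" if tT: "t \<in> T" for t
    unfolding stuttering_fun_def
  proof (intro conjI allI impI)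
    show "strict_mono g" by (rule smg)
    show "g 0 = 0" by (simp add: g_def)
    fix j m assume jm: "g j \<le> m \<and> m < g (Suc j)"
    have stt: "stuttering_fun t f" using st tT unfolding stuttering_fun_team_def by blast
    have "t (f k + p + m) = t (f (k + j))"
    proof (cases "j = 0")
      case True
      then have "m < f (Suc k) - f k - p" using jm by (simp add: g_def)
      then have "t (f k + p + m) = t (f k)"
        using stut_block[OF stt, of k "f k + p + m"] by simp
      then show ?thesis using True by simp
    next
      case False
      have a: "f (k + j) \<ge> f (Suc k)" using fge False by simp
      have b: "f (k + Suc j) \<ge> f (Suc k)" using fge[of "Suc j"] by simp
      have "f (k + j) \<le> f k + p + m" "f k + p + m < f (Suc (k + j))"
        using jm False a b p by (simp_all add: g_def, linarith+)
      then show ?thesis using stut_block[OF stt, of "k + j" "f k + p + m"] by simp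
    qed
    then show "suffix_trace t (f k + p) m = suffix_trace t (f k + p) (g j)"
      using val[OF tT, of j] by (simp add: suffix_trace_def)
  qed
  have "apply_fun_team (suffix_team T (f k + p)) g = (\<lambda>t. apply_fun_trace (suffix_trace t (f k + p)) g) ` T"
    unfolding apply_fun_team_def suffix_team_def by (simp add: image_image)
  also have "\<dots> = (\<lambda>t j. t (f (k + j))) ` T"
    by (rule image_cong[OF refl]) (auto simp: apply_fun_trace_def suffix_trace_def val)
  finally show ?thesis using stg unfolding stuttering_fun_team_def suffix_team_def by auto
qed

lemma mu_props:
  assumes smf: "strict_mono f" and f0: "f 0 = 0" and smh: "strict_mono h" and h0: "h 0 = 0"
    and le: "\<And>k. f (Suc k) - f k \<le> h (Suc k) - h k"
  defines "\<mu> \<equiv> (\<lambda>n. f (blk h n) + min (n - h (blk h n)) (f (Suc (blk h n)) - f (blk h n) - 1))"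
  shows "surj \<mu> \<and> mono \<mu> \<and> (\<forall>n. f (blk h n) \<le> \<mu> n \<and> \<mu> n - f (blk h n) < f (Suc (blk h n)) - f (blk h n))"
proof -
  have fs: "f k < f (Suc k)" for k using smf by (simp add: strict_mono_less)
  have bnd: "f (blk h n) \<le> \<mu> n \<and> \<mu> n < f (Suc (blk h n))" for n
    using fs[of "blk h n"] unfolding \<mu>_def by auto
  have "mono \<mu>"
  proof (rule monoI)
    fix n m :: nat assume nm: "n \<le> m"
    have kk: "blk h n \<le> blk h m" by (rule blk_mono[OF nm smh h0])
    show "\<mu> n \<le> \<mu> m"
    proof (cases "blk h n = blk h m")
      case True
      have "n - h (blk h m) \<le> m - h (blk h m)" using nm by (rule diff_le_mono)
      then show ?thesis using True unfolding \<mu>_def by (simp add: min.mono)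
    next
      case False
      then have "Suc (blk h n) \<le> blk h m" using kk by simp
      then have "f (Suc (blk h n)) \<le> f (blk h m)" using smf strict_mono_less_eq by blast
      then show ?thesis using bnd[of n] bnd[of m] by linarith
    qed
  qed
  moreover have "surj \<mu>"
  proof (rule surjI)
    fix x
    define k where "k = blk f x"
    have fk: "f k \<le> x" "x < f (Suc k)" using blk_props[OF smf f0, of x] k_def by auto
    have "x - f k < h (Suc k) - h k" using fk le[of k] by linarith
    then have "blk h (h k + (x - f k)) = k"
      by (intro blk_unique[OF smh]) auto
    then show "\<mu> (h k + (x - f k)) = x" unfolding \<mu>_def using fk by simp
  qed
  moreover have "\<mu> n - f (blk h n) < f (Suc (blk h n)) - f (blk h n)" for n
    using bnd[of n] by linarith
  ultimately show ?thesis using bnd by blast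
qed

lemma suffix_team_0: "suffix_team T 0 = T"
  unfolding suffix_team_def suffix_trace_def by simp

lemma mono_surj_0:
  fixes \<mu> :: "nat \<Rightarrow> nat"
  assumes "surj \<mu>" "mono \<mu>" shows "\<mu> 0 = 0"
proof -
  obtain x where "0 = \<mu> x" using assms(1) by (metis surjD)
  moreover have "\<mu> 0 \<le> \<mu> x" using assms(2) by (simp add: monoD)
  ultimately show ?thesis by simp
qed

lemma empty_equiv: "stutter_equiv {} ({}::'a team)"
  unfolding stutter_equiv_def stuttering_fun_team_def apply_fun_team_def by auto

theorem mainTheorem8:
  fixes T S :: "'a team"
  shows "stutter_equiv T S \<longleftrightarrow>
    (\<exists>\<mu> \<nu> :: nat \<Rightarrow> nat. surj \<mu> \<and> mono \<mu> \<and> surj \<nu> \<and> mono \<nu> \<and>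
       (\<forall>n. stutter_equiv (suffix_team T (\<mu> n)) (suffix_team S (\<nu> n))))"
proof
  assume "\<exists>\<mu> \<nu> :: nat \<Rightarrow> nat. surj \<mu> \<and> mono \<mu> \<and> surj \<nu> \<and> mono \<nu> \<and>
       (\<forall>n. stutter_equiv (suffix_team T (\<mu> n)) (suffix_team S (\<nu> n)))"
  then obtain \<mu> \<nu> :: "nat \<Rightarrow> nat" where h: "surj \<mu>" "mono \<mu>" "surj \<nu>" "mono \<nu>"
    "\<forall>n. stutter_equiv (suffix_team T (\<mu> n)) (suffix_team S (\<nu> n))" by blast
  then show "stutter_equiv T S" using h(5)[rule_format, of 0]
    by (simp add: mono_surj_0 suffix_team_0)
next
  assume "stutter_equiv T S"
  then obtain f f' where st: "stuttering_fun_team T f" and st': "stuttering_fun_team S f'"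
    and eq: "apply_fun_team T f = apply_fun_team S f'"
    unfolding stutter_equiv_def by blast
  show "\<exists>\<mu> \<nu> :: nat \<Rightarrow> nat. surj \<mu> \<and> mono \<mu> \<and> surj \<nu> \<and> mono \<nu> \<and>
       (\<forall>n. stutter_equiv (suffix_team T (\<mu> n)) (suffix_team S (\<nu> n)))"
  proof (cases "T = {}")
    case True
    then have "S = {}" using eq unfolding apply_fun_team_def by auto
    then show ?thesis using True empty_equiv
      by (intro exI[of _ id]) (auto simp: suffix_team_def mono_def)
  next
    case False
    then have "S \<noteq> {}" using eq unfolding apply_fun_team_def by auto
    then obtain s where "s \<in> S" by blast
    obtain t where "t \<in> T" using False by blast
    have smf: "strict_mono f" and f0: "f 0 = 0"
      using st \<open>t \<in> T\<close> unfolding stuttering_fun_team_def stuttering_fun_def by auto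
    have smf': "strict_mono f'" and f0': "f' 0 = 0"
      using st' \<open>s \<in> S\<close> unfolding stuttering_fun_team_def stuttering_fun_def by auto
    define h where "h = (\<lambda>k. f k + f' k)"
    have smh: "strict_mono h" using smf smf' unfolding h_def strict_mono_def by (simp add: add_strict_mono)
    have h0: "h 0 = 0" using f0 f0' by (simp add: h_def)
    have le1: "f (Suc k) - f k \<le> h (Suc k) - h k" for k
      using smf'[THEN strict_mono_less_eq, of k "Suc k"] unfolding h_def by simp
    have le2: "f' (Suc k) - f' k \<le> h (Suc k) - h k" for k
      using smf[THEN strict_mono_less_eq, of k "Suc k"] unfolding h_def by simp
    define \<mu> where "\<mu> = (\<lambda>n. f (blk h n) + min (n - h (blk h n)) (f (Suc (blk h n)) - f (blk h n) - 1))"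
    define \<nu> where "\<nu> = (\<lambda>n. f' (blk h n) + min (n - h (blk h n)) (f' (Suc (blk h n)) - f' (blk h n) - 1))"
    have M: "surj \<mu> \<and> mono \<mu> \<and> (\<forall>n. f (blk h n) \<le> \<mu> n \<and> \<mu> n - f (blk h n) < f (Suc (blk h n)) - f (blk h n))"
      unfolding \<mu>_def by (rule mu_props[OF smf f0 smh h0 le1])
    have N: "surj \<nu> \<and> mono \<nu> \<and> (\<forall>n. f' (blk h n) \<le> \<nu> n \<and> \<nu> n - f' (blk h n) < f' (Suc (blk h n)) - f' (blk h n))"
      unfolding \<nu>_def by (rule mu_props[OF smf' f0' smh h0 le2])
    have shiftEq: "(\<lambda>t j. t (f (k + j))) ` T = (\<lambda>t j. t (f' (k + j))) ` S" for k
    proof -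
      have "(\<lambda>u j. u (k + j)) ` apply_fun_team T f = (\<lambda>u j. u (k + j)) ` apply_fun_team S f'"
        using eq by simp
      then show ?thesis unfolding apply_fun_team_def apply_fun_trace_def image_image .
    qed
    have "stutter_equiv (suffix_team T (\<mu> n)) (suffix_team S (\<nu> n))" for n
    proof -
      define k where "k = blk h n"
      define p where "p = \<mu> n - f k"
      define q where "q = \<nu> n - f' k"
      have mp: "\<mu> n = f k + p" "p < f (Suc k) - f k" using M unfolding p_def k_def by auto
      have nq: "\<nu> n = f' k + q" "q < f' (Suc k) - f' k" using N unfolding q_def k_def by auto
      note A = shift_equiv[OF st smf mp(2)]
      note B = shift_equiv[OF st' smf' nq(2)]
      show ?thesis unfolding stutter_equiv_def mp(1) nq(1)
        apply (rule exI, rule exI, rule conjI[OF conjunct1[OF A] conjI[OF conjunct1[OF B]]])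
        using conjunct2[OF A] conjunct2[OF B] shiftEq[of k] by simp
    qed
    then show ?thesis using M N by (intro exI[of _ \<mu>] exI[of _ \<nu>]) simp
  qed
qed

end
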